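(* Let $V\subset\mathbb{R}^{n_s}$ be an oriented open set, $\mathcal{G}$ a Riemannian metric on $V$, $\mathcal{J}$ a taming map on $V$, and $\mathcal{N}=\mu(\mathcal{J})$. Then $$\{(f,\mathfrak{A})\in\mathrm{Iso}(V,\mathcal{G})\times\mathrm{Sp}(2n_v,\mathbb{R}):\mathfrak{A}\cdot\mathcal{N}=\mathcal{N}\circ f\}=\{(f,\mathfrak{A})\in\mathrm{Iso}(V,\mathcal{G})\times\mathrm{Sp}(2n_v,\mathbb{R}):\mathfrak{A}\mathcal{J}\mathfrak{A}^{-1}=\mathcal{J}\circ f\},$$ so that the identity map gives a canonical isomorphism of groups $\mathrm{U}(\mathcal{G},\mathcal{N})\cong\mathrm{U}(\mathcal{G},\mathcal{J})$ between these two sets (with componentwise composition).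
   Context: $\mathrm{Iso}(V,\mathcal{G})$ is the isometry group of $(V,\mathcal{G})$. The standard symplectic form $\omega$ on $\mathbb{R}^{2n_v}$ has matrix $\begin{pmatrix}0&-\mathrm{Id}\\ \mathrm{Id}&0\end{pmatrix}$ in the canonical basis; $\mathrm{Sp}(2n_v,\mathbb{R})$ is its stabilizer. A taming map is a smooth $\mathcal{J}\colon V\to\mathrm{Aut}(\mathbb{R}^{2n_v})$ whose values are complex structures $J$ with $\omega(J\cdot,J\cdot)=\omega$ and $\omega(\xi,J\xi)>0$ for $\xi\neq0$; every taming map is uniquely of the form $\begin{pmatrix}-\mathcal{I}^{-1}\mathcal{R} & \mathcal{I}^{-1}\\ -\mathcal{I}-\mathcal{R}\mathcal{I}^{-1}\mathcal{R} & \mathcal{R}\mathcal{I}^{-1}\end{pmatrix}$ with smooth $\mathcal{R},\mathcal{I}\colon V\to\mathrm{Sym}(n_v,\mathbb{R})$, $\mathcal{I}$ pointwise positive definite, and $\mu(\mathcal{J})=\mathcal{R}+i\mathcal{I}\colon V\to\mathbb{SH}(n_v)$ (the Siegel upper space of complex symmetric matrices with positive definite imaginary part). For $\mathfrak{A}=\begin{pmatrix}a&b\\ c&d\end{pmatrix}$ in $n_v\times n_v$ blocks, $\mathfrak{A}\cdot\tau=(c+d\tau)(a+b\tau)^{-1}$, applied pointwise to $\mathcal{N}$. *)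

theory Defs
  imports "HOL-Analysis.Analysis"
begin

definition partial_deriv :: "'n::finite \<Rightarrow> (real^'n \<Rightarrow> real) \<Rightarrow> real^'n \<Rightarrow> real" where
  "partial_deriv i g x = frechet_derivative g (at x) (axis i 1)"

fun iter_partial :: "'n::finite list \<Rightarrow> (real^'n \<Rightarrow> real) \<Rightarrow> real^'n \<Rightarrow> real" where
  "iter_partial [] g = g"
| "iter_partial (i # is) g = partial_deriv i (iter_partial is g)"

definition smooth_on :: "(real^'n::finite) set \<Rightarrow> (real^'n \<Rightarrow> real) \<Rightarrow> bool" where
  "smooth_on V g \<longleftrightarrow> (\<forall>is. iter_partial is g differentiable_on V)"

definition smooth_vec_on :: "(real^'n::finite) set \<Rightarrow> (real^'n \<Rightarrow> real^'k::finite) \<Rightarrow> bool" where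
  "smooth_vec_on V f \<longleftrightarrow> (\<forall>k. smooth_on V (\<lambda>x. f x $ k))"

definition smooth_mat_on :: "(real^'n::finite) set \<Rightarrow> (real^'n \<Rightarrow> real^'p::finite^'q::finite) \<Rightarrow> bool" where
  "smooth_mat_on V M \<longleftrightarrow> (\<forall>i j. smooth_on V (\<lambda>x. M x $ i $ j))"

definition pos_def_mat :: "real^'n::finite^'n \<Rightarrow> bool" where
  "pos_def_mat S \<longleftrightarrow> (\<forall>v. v \<noteq> 0 \<longrightarrow> v \<bullet> (S *v v) > 0)"

definition riemannian_metric :: "(real^'n::finite) set \<Rightarrow> (real^'n \<Rightarrow> real^'n^'n) \<Rightarrow> bool" where
  "riemannian_metric V G \<longleftrightarrow> smooth_mat_on V G \<and>
     (\<forall>x\<in>V. transpose (G x) = G x \<and> pos_def_mat (G x))"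

definition jac :: "(real^'n::finite \<Rightarrow> real^'m::finite) \<Rightarrow> real^'n \<Rightarrow> real^'n^'m" where
  "jac f x = matrix (frechet_derivative f (at x))"

definition diffeo_on :: "(real^'n::finite) set \<Rightarrow> (real^'n \<Rightarrow> real^'n) \<Rightarrow> bool" where
  "diffeo_on V f \<longleftrightarrow> bij_betw f V V \<and> smooth_vec_on V f \<and> smooth_vec_on V (inv_into V f)"

definition Iso :: "(real^'n::finite) set \<Rightarrow> (real^'n \<Rightarrow> real^'n^'n) \<Rightarrow> (real^'n \<Rightarrow> real^'n) set" where
  "Iso V G = {f. diffeo_on V f \<and>
     (\<forall>x\<in>V. transpose (jac f x) ** G (f x) ** jac f x = G x)}"

text \<open>The canonical basis of R^(2n_v) is indexed by 'm + 'm, with the first n_v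
  coordinates being Inl and the last n_v being Inr.\<close>


definition omega_mat :: "real^('m::finite + 'm)^('m + 'm)" where
  "omega_mat = (\<chi> i j. (case (i, j) of
      (Inl a, Inr b) \<Rightarrow> (if a = b then -1 else 0)
    | (Inr a, Inl b) \<Rightarrow> (if a = b then 1 else 0)
    | _ \<Rightarrow> 0))"

definition omega :: "real^('m::finite + 'm) \<Rightarrow> real^('m + 'm) \<Rightarrow> real" where
  "omega u v = u \<bullet> (omega_mat *v v)"

definition Sp :: "(real^('m::finite + 'm)^('m + 'm)) set" where
  "Sp = {A. \<forall>u v. omega (A *v u) (A *v v) = omega u v}"

definition blk_a :: "'a^('m::finite + 'm)^('m + 'm) \<Rightarrow> 'a^'m^'m" where
  "blk_a M = (\<chi> i j. M $ Inl i $ Inl j)"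
definition blk_b :: "'a^('m::finite + 'm)^('m + 'm) \<Rightarrow> 'a^'m^'m" where
  "blk_b M = (\<chi> i j. M $ Inl i $ Inr j)"
definition blk_c :: "'a^('m::finite + 'm)^('m + 'm) \<Rightarrow> 'a^'m^'m" where
  "blk_c M = (\<chi> i j. M $ Inr i $ Inl j)"
definition blk_d :: "'a^('m::finite + 'm)^('m + 'm) \<Rightarrow> 'a^'m^'m" where
  "blk_d M = (\<chi> i j. M $ Inr i $ Inr j)"

definition block_mat :: "'a^'m::finite^'m \<Rightarrow> 'a^'m^'m \<Rightarrow> 'a^'m^'m \<Rightarrow> 'a^'m^'m \<Rightarrow> 'a^('m + 'm)^('m + 'm)" where
  "block_mat a b c d = (\<chi> i j. (case (i, j) of
      (Inl p, Inl q) \<Rightarrow> a $ p $ q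
    | (Inl p, Inr q) \<Rightarrow> b $ p $ q
    | (Inr p, Inl q) \<Rightarrow> c $ p $ q
    | (Inr p, Inr q) \<Rightarrow> d $ p $ q))"

definition tame_cs :: "real^('m::finite + 'm)^('m + 'm) \<Rightarrow> bool" where
  "tame_cs J \<longleftrightarrow> J ** J = - mat 1 \<and>
     (\<forall>u v. omega (J *v u) (J *v v) = omega u v) \<and>
     (\<forall>\<xi>. \<xi> \<noteq> 0 \<longrightarrow> omega \<xi> (J *v \<xi>) > 0)"

definition taming_map :: "(real^'n::finite) set \<Rightarrow> (real^'n \<Rightarrow> real^('m::finite + 'm)^('m + 'm)) \<Rightarrow> bool" where
  "taming_map V J \<longleftrightarrow> smooth_mat_on V J \<and> (\<forall>x\<in>V. invertible (J x) \<and> tame_cs (J x))"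

definition Re_mat :: "complex^'m::finite^'m \<Rightarrow> real^'m^'m" where
  "Re_mat t = (\<chi> i j. Re (t $ i $ j))"
definition Im_mat :: "complex^'m::finite^'m \<Rightarrow> real^'m^'m" where
  "Im_mat t = (\<chi> i j. Im (t $ i $ j))"
definition cmat :: "real^'p::finite^'q::finite \<Rightarrow> complex^'p^'q" where
  "cmat M = (\<chi> i j. complex_of_real (M $ i $ j))"

definition SH :: "(complex^'m::finite^'m) set" where
  "SH = {t. transpose t = t \<and> pos_def_mat (Im_mat t)}"

definition taming_form :: "real^'m::finite^'m \<Rightarrow> real^'m^'m \<Rightarrow> real^('m + 'm)^('m + 'm)" where
  "taming_form R I = block_mat (- (matrix_inv I ** R)) (matrix_inv I)
      (- I - R ** matrix_inv I ** R) (R ** matrix_inv I)"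

definition mu :: "(real^'n \<Rightarrow> real^('m::finite + 'm)^('m + 'm)) \<Rightarrow> real^'n \<Rightarrow> complex^'m^'m" where
  "mu J x = (THE t. t \<in> SH \<and> J x = taming_form (Re_mat t) (Im_mat t))"

definition sp_act :: "real^('m::finite + 'm)^('m + 'm) \<Rightarrow> complex^'m^'m \<Rightarrow> complex^'m^'m" where
  "sp_act A t = (cmat (blk_c A) + cmat (blk_d A) ** t) ** matrix_inv (cmat (blk_a A) + cmat (blk_b A) ** t)"

end

theory Submission
  imports Defs
begin

lemma minv:
  fixes A :: "'a::field^'n^'n"
  assumes "invertible A"
  shows "A ** matrix_inv A = mat 1" "matrix_inv A ** A = mat 1"
proof -
  have "\<exists>A'. A ** A' = mat 1 \<and> A' ** A = mat 1" using assms unfolding invertible_def by blast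
  hence "A ** matrix_inv A = mat 1 \<and> matrix_inv A ** A = mat 1"
    unfolding matrix_inv_def by (rule someI_ex)
  thus "A ** matrix_inv A = mat 1" "matrix_inv A ** A = mat 1" by auto
qed

lemma inv_of_ker:
  fixes A :: "'a::field^'n^'n"
  assumes "\<And>x. A *v x = 0 \<Longrightarrow> x = 0"
  shows "invertible A"
  using assms invertible_left_inverse matrix_left_invertible_ker by blast

lemma minv_inv:
  fixes A :: "'a::field^'n^'n"
  assumes "invertible A"
  shows "matrix_inv (matrix_inv A) = A" "invertible (matrix_inv A)"
proof -
  show i: "invertible (matrix_inv A)" using minv[OF assms] unfolding invertible_def by blast
  have "matrix_inv (matrix_inv A) = matrix_inv (matrix_inv A) ** (matrix_inv A ** A)"
    using minv(2)[OF assms] by simp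
  also have "\<dots> = A" by (metis minv(2)[OF i] matrix_mul_lid matrix_mul_assoc)
  finally show "matrix_inv (matrix_inv A) = A" .
qed

lemma minv_vec:
  fixes A :: "'a::field^'n^'n"
  assumes "invertible A"
  shows "A *v (matrix_inv A *v x) = x" "matrix_inv A *v (A *v x) = x"
  using minv[OF assms] by (simp_all add: matrix_vector_mul_assoc)

lemma posdef_inv:
  fixes S :: "real^'n^'n"
  assumes "pos_def_mat S"
  shows "invertible S"
  by (rule inv_of_ker) (metis assms inner_zero_right less_irrefl pos_def_mat_def)

lemma posdef_nonneg:
  fixes S :: "real^'n^'n"
  assumes "pos_def_mat S"
  shows "0 \<le> v \<bullet> (S *v v)"
  using assms unfolding pos_def_mat_def by (cases "v = 0") (auto intro: less_imp_le)

lemma sym_inner: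
  fixes M :: "real^'n^'n"
  assumes "transpose M = M"
  shows "(M *v x) \<bullet> y = x \<bullet> (M *v y)"
  by (metis assms dot_lmul_matrix vector_transpose_matrix)

lemma inner_sym_transpose:
  fixes M :: "real^'n^'n"
  assumes "\<And>x y. x \<bullet> (M *v y) = y \<bullet> (M *v x)"
  shows "transpose M = M"
proof -
  have "M $ i $ j = M $ j $ i" for i j
    using assms[of "axis i 1" "axis j 1"]
    by (simp add: matrix_vector_mult_basis inner_axis' column_def)
  thus ?thesis by (simp add: transpose_def vec_eq_iff)
qed


definition stk :: "real^'m::finite \<Rightarrow> real^'m \<Rightarrow> real^('m + 'm)" where
  "stk x y = (\<chi> i. case i of Inl p \<Rightarrow> x $ p | Inr p \<Rightarrow> y $ p)"

definition vtop :: "real^('m::finite + 'm) \<Rightarrow> real^'m" where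
  "vtop v = (\<chi> p. v $ Inl p)"
definition vbot :: "real^('m::finite + 'm) \<Rightarrow> real^'m" where
  "vbot v = (\<chi> p. v $ Inr p)"

lemma stk_nth[simp]: "stk x y $ Inl p = x $ p" "stk x y $ Inr p = y $ p"
  by (simp_all add: stk_def)

lemma stk_decomp: "v = stk (vtop v) (vbot v)"
  by (simp add: vec_eq_iff stk_def vtop_def vbot_def split: sum.split)

lemma stk_eq_iff[simp]: "stk x y = stk x' y' \<longleftrightarrow> x = x' \<and> y = y'"
proof
  assume h: "stk x y = stk x' y'"
  have "x $ p = x' $ p" "y $ p = y' $ p" for p
    using arg_cong[OF h, of "\<lambda>v. v $ Inl p"] arg_cong[OF h, of "\<lambda>v. v $ Inr p"] by simp_all
  thus "x = x' \<and> y = y'" by (simp add: vec_eq_iff)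
qed simp

lemma stk_add: "stk x y + stk x' y' = stk (x + x') (y + y')"
  by (simp add: vec_eq_iff stk_def split: sum.split)
lemma stk_neg: "- stk x y = stk (-x) (-y)"
  by (simp add: vec_eq_iff stk_def split: sum.split)
lemma stk_zero: "stk 0 0 = 0"
  by (simp add: vec_eq_iff stk_def split: sum.split)

lemma sum_plus_univ: "(\<Sum>i\<in>(UNIV::('m::finite + 'm) set). g i) = (\<Sum>p\<in>UNIV. g (Inl p)) + (\<Sum>p\<in>UNIV. g (Inr p))"
  using sum.Plus[of "UNIV::'m set" "UNIV::'m set" g] by (simp add: comp_def)

lemma stk_inner: "stk x y \<bullet> stk x' y' = x \<bullet> x' + y \<bullet> y'"
  by (simp add: inner_vec_def sum_plus_univ)

lemma mv_stk: "(M::real^('m::finite+'m)^('m+'m)) *v stk x y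
   = stk (blk_a M *v x + blk_b M *v y) (blk_c M *v x + blk_d M *v y)"
  by (simp add: vec_eq_iff matrix_vector_mult_def sum_plus_univ blk_a_def blk_b_def blk_c_def blk_d_def
        stk_def split: sum.split)

lemma blk_block[simp]:
  "blk_a (block_mat a b c d) = a" "blk_b (block_mat a b c d) = b"
  "blk_c (block_mat a b c d) = c" "blk_d (block_mat a b c d) = d"
  by (simp_all add: vec_eq_iff blk_a_def blk_b_def blk_c_def blk_d_def block_mat_def)

lemma mv_neg_right: "(A::real^'n^'k) *v (- x) = - (A *v x)"
  by (simp add: vec_eq_iff matrix_vector_mult_def sum_negf)
lemma mv_neg_left: "(- A::real^'n^'k) *v x = - (A *v x)"
  by (simp add: vec_eq_iff matrix_vector_mult_def sum_negf)

lemma omega_blocks: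
  "blk_a (omega_mat::real^('m::finite+'m)^('m+'m)) = 0"
  "blk_b (omega_mat::real^('m::finite+'m)^('m+'m)) = - mat 1"
  "blk_c (omega_mat::real^('m::finite+'m)^('m+'m)) = mat 1"
  "blk_d (omega_mat::real^('m::finite+'m)^('m+'m)) = 0"
  by (simp_all add: vec_eq_iff blk_a_def blk_b_def blk_c_def blk_d_def omega_mat_def mat_def)

lemma omega_mat_stk: "(omega_mat::real^('m::finite+'m)^('m+'m)) *v stk x y = stk (-y) x"
  by (simp add: mv_stk omega_blocks mv_neg_left)

lemma omega_stk: "omega (stk x y) (stk x' y') = - (x \<bullet> y') + y \<bullet> x'"
  by (simp add: omega_def omega_mat_stk stk_inner)

lemma omega_antisym: "omega u v = - omega v u"
  by (subst (1 2) stk_decomp[of u], subst (1 2) stk_decomp[of v]) (simp add: omega_stk inner_commute)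

lemma omega_neg: "omega u (- v) = - omega u v"
  by (simp add: omega_def mv_neg_right)

lemma omega_zero: "omega u 0 = 0"
  by (simp add: omega_def)

lemma mv_stk_gen: "(M::real^('m::finite+'m)^('m+'m)) *v v
   = stk (blk_a M *v vtop v + blk_b M *v vbot v) (blk_c M *v vtop v + blk_d M *v vbot v)"
  by (subst stk_decomp[of v], subst mv_stk) simp


lemma tf_stk:
  fixes R I :: "real^'m::finite^'m"
  shows "taming_form R I *v stk x y =
    stk (matrix_inv I *v (y - R *v x)) (- (I *v x) + R *v (matrix_inv I *v (y - R *v x)))"
  by (simp add: taming_form_def mv_stk matrix_vector_mult_diff_rdistrib mv_neg_left
      matrix_vector_mult_diff_distrib matrix_vector_right_distrib
      flip: matrix_vector_mul_assoc)

lemma Re_Im_eq: "(t::complex^'m::finite^'m) = s \<longleftrightarrow> Re_mat t = Re_mat s \<and> Im_mat t = Im_mat s"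
  by (auto simp: Re_mat_def Im_mat_def vec_eq_iff complex_eq_iff)

lemma SH_sym:
  assumes "t \<in> SH"
  shows "transpose (Re_mat t) = Re_mat t" "transpose (Im_mat t) = Im_mat t" "pos_def_mat (Im_mat t)"
proof -
  have "transpose t = t" using assms by (simp add: SH_def)
  hence e: "t $ j $ i = t $ i $ j" for i j by (metis transpose_def vec_lambda_beta)
  show "transpose (Re_mat t) = Re_mat t" "transpose (Im_mat t) = Im_mat t"
    by (simp_all add: transpose_def Re_mat_def Im_mat_def vec_eq_iff e)
  show "pos_def_mat (Im_mat t)" using assms by (simp add: SH_def)
qed

lemma tf_unique:
  assumes "t \<in> SH" "s \<in> SH"
    and eq: "taming_form (Re_mat t) (Im_mat t) = taming_form (Re_mat s) (Im_mat s)"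
  shows "t = s"
proof -
  have it: "invertible (Im_mat t)" and isv: "invertible (Im_mat s)"
    using SH_sym(3)[OF assms(1)] SH_sym(3)[OF assms(2)] posdef_inv by blast+
  have "matrix_inv (Im_mat t) = matrix_inv (Im_mat s)"
    using arg_cong[OF eq, of blk_b] by (simp add: taming_form_def)
  hence ieq: "Im_mat t = Im_mat s" by (metis minv_inv(1) it isv)
  have "Re_mat t ** matrix_inv (Im_mat t) = Re_mat s ** matrix_inv (Im_mat t)"
    using arg_cong[OF eq, of blk_d] ieq by (simp add: taming_form_def)
  hence "Re_mat t ** matrix_inv (Im_mat t) ** Im_mat t = Re_mat s ** matrix_inv (Im_mat t) ** Im_mat t"
    by simp
  hence "Re_mat t = Re_mat s" by (simp add: minv(2)[OF it] flip: matrix_mul_assoc)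
  thus ?thesis using ieq Re_Im_eq by blast
qed

lemma tame_exists:
  fixes J :: "real^('m::finite + 'm)^('m + 'm)"
  assumes T: "tame_cs J"
  shows "\<exists>t. t \<in> SH \<and> J = taming_form (Re_mat t) (Im_mat t)"
proof -
  define ja where "ja = blk_a J"
  define jb where "jb = blk_b J"
  define jc where "jc = blk_c J"
  define jd where "jd = blk_d J"
  have Jv: "J *v stk x y = stk (ja *v x + jb *v y) (jc *v x + jd *v y)" for x y
    by (simp add: mv_stk ja_def jb_def jc_def jd_def)
  have JJ: "J *v (J *v v) = - v" for v
  proof -
    have "J ** J = - mat 1" using T by (simp add: tame_cs_def)
    thus ?thesis by (simp add: matrix_vector_mul_assoc mv_neg_left)
  qed
  have inv: "omega (J *v u) (J *v v) = omega u v" for u v using T by (simp add: tame_cs_def)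
  have pos: "\<xi> \<noteq> 0 \<Longrightarrow> omega \<xi> (J *v \<xi>) > 0" for \<xi> using T by (simp add: tame_cs_def)
  have h12: "ja *v (jb *v y) + jb *v (jd *v y) = 0 \<and> jc *v (jb *v y) + jd *v (jd *v y) = - y" for y
  proof -
    have "J *v (J *v stk 0 y) = stk 0 (- y)" using JJ[of "stk 0 y"] by (simp add: stk_neg)
    thus ?thesis by (simp add: Jv)
  qed
  have h1: "ja *v (jb *v y) + jb *v (jd *v y) = 0" for y using h12 by blast
  have h2: "jc *v (jb *v y) + jd *v (jd *v y) = - y" for y using h12 by blast
  have sym: "omega u (J *v v) = omega v (J *v u)" for u v
  proof -
    have "omega u (J *v v) = omega (J *v u) (J *v (J *v v))" using inv by simp
    also have "\<dots> = - omega (J *v u) v" by (simp add: JJ omega_neg)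
    also have "\<dots> = omega v (J *v u)" by (subst omega_antisym) simp
    finally show ?thesis .
  qed
  have jbsym: "x \<bullet> (jb *v y) = y \<bullet> (jb *v x)" for x y
    using sym[of "stk 0 x" "stk 0 y"] by (simp add: Jv omega_stk)
  have hda: "- (x \<bullet> (jd *v y)) = y \<bullet> (ja *v x)" for x y
    using sym[of "stk x 0" "stk 0 y"] by (simp add: Jv omega_stk)
  have jbpos: "pos_def_mat jb"
    unfolding pos_def_mat_def
  proof (intro allI impI)
    fix v :: "real^'m" assume "v \<noteq> 0"
    hence "stk 0 v \<noteq> 0" by (metis stk_eq_iff stk_zero)
    from pos[OF this] show "v \<bullet> (jb *v v) > 0" by (simp add: Jv omega_stk)
  qed
  have jbi: "invertible jb" using jbpos posdef_inv by blast
  define I where "I = matrix_inv jb"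
  define R where "R = jd ** I"
  have Ijb: "I *v (jb *v z) = z" "jb *v (I *v z) = z" for z
    using minv_vec[OF jbi] by (simp_all add: I_def)
  have Ii: "invertible I" "matrix_inv I = jb" using minv_inv[OF jbi] by (simp_all add: I_def)
  have Isym: "x \<bullet> (I *v y) = y \<bullet> (I *v x)" for x y
    using jbsym[of "I *v y" "I *v x"] Ijb(2)[of x] Ijb(2)[of y]
    by (metis inner_commute)
  have Ipos: "pos_def_mat I"
    unfolding pos_def_mat_def
  proof (intro allI impI)
    fix v :: "real^'m" assume v: "v \<noteq> 0"
    have w: "I *v v \<noteq> 0" using v Ijb(2)[of v] by fastforce
    have "v \<bullet> (I *v v) = (I *v v) \<bullet> (jb *v (I *v v))"
      by (metis Ijb(2) inner_commute)
    with jbpos w show "v \<bullet> (I *v v) > 0" by (simp add: pos_def_mat_def)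
  qed
  have jdf: "jd *v z = - (I *v (ja *v (jb *v z)))" for z
  proof -
    have "jb *v (jd *v z) = - (ja *v (jb *v z))" using h1[of z] by (simp add: eq_neg_iff_add_eq_0 add.commute)
    hence "I *v (jb *v (jd *v z)) = I *v (- (ja *v (jb *v z)))" by simp
    thus ?thesis by (simp add: Ijb mv_neg_right)
  qed
  have Rv: "R *v y = jd *v (I *v y)" for y by (simp add: R_def matrix_vector_mul_assoc)
  have Rv2: "R *v y = - (I *v (ja *v y))" for y by (simp add: Rv jdf Ijb)
  have Rsym: "x \<bullet> (R *v y) = y \<bullet> (R *v x)" for x y
  proof -
    have "x \<bullet> (R *v y) = - ((I *v y) \<bullet> (ja *v x))" using hda[of x "I *v y"] by (simp add: Rv)
    moreover have "y \<bullet> (R *v x) = - (y \<bullet> (I *v (ja *v x)))" by (simp add: Rv2)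
    moreover have "y \<bullet> (I *v (ja *v x)) = (ja *v x) \<bullet> (I *v y)" by (rule Isym)
    ultimately show ?thesis by (simp add: inner_commute)
  qed
  have tfJ: "taming_form R I = J"
  proof (rule matrix_eq[THEN iffD2], intro allI)
    fix v :: "real^('m+'m)"
    obtain x y where v: "v = stk x y" using stk_decomp by blast
    have t1: "jb *v (y - R *v x) = ja *v x + jb *v y"
      using h1[of "I *v x"] by (simp add: Rv Ijb matrix_vector_mult_diff_distrib algebra_simps eq_neg_iff_add_eq_0)
    have RJ: "R *v (jb *v z) = jd *v z" for z by (simp add: Rv Ijb)
    have a: "R *v (jb *v (y - R *v x)) = jd *v y - jd *v (jd *v (I *v x))"
      by (simp only: RJ matrix_vector_mult_diff_distrib Rv Ijb)
    have b: "jc *v x + jd *v (jd *v (I *v x)) = - (I *v x)" using h2[of "I *v x"] by (simp only: Ijb)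
    have b': "jc *v x = - (I *v x) - jd *v (jd *v (I *v x))" by (subst eq_diff_eq) (rule b)
    have t2: "- (I *v x) + R *v (jb *v (y - R *v x)) = jc *v x + jd *v y"
      by (simp only: a b') (simp add: algebra_simps)
    show "taming_form R I *v v = J *v v"
      using t2 by (simp add: v tf_stk Ii Jv t1)
  qed
  define t :: "complex^'m^'m" where "t = (\<chi> i j. Complex (R $ i $ j) (I $ i $ j))"
  have Ret: "Re_mat t = R" and Imt: "Im_mat t = I" by (simp_all add: t_def Re_mat_def Im_mat_def vec_eq_iff)
  have RT: "transpose R = R" by (rule inner_sym_transpose) (rule Rsym)
  have IT: "transpose I = I" by (rule inner_sym_transpose) (rule Isym)
  have "transpose t = t"
  proof -
    have "R $ j $ i = R $ i $ j" "I $ j $ i = I $ i $ j" for i j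
      using RT IT by (metis transpose_def vec_lambda_beta)+
    thus ?thesis by (simp add: t_def transpose_def vec_eq_iff)
  qed
  hence "t \<in> SH" using Ipos Imt by (simp add: SH_def)
  thus ?thesis using tfJ Ret Imt by metis
qed

lemma mu_props:
  assumes "tame_cs (J x)"
  shows "mu J x \<in> SH \<and> J x = taming_form (Re_mat (mu J x)) (Im_mat (mu J x))"
proof -
  have "\<exists>!t. t \<in> SH \<and> J x = taming_form (Re_mat t) (Im_mat t)"
    using tame_exists[OF assms] tf_unique by metis
  thus ?thesis unfolding mu_def by (rule theI')
qed


definition crev :: "complex^'m::finite \<Rightarrow> real^'m" where "crev v = (\<chi> i. Re (v $ i))"
definition imv :: "complex^'m::finite \<Rightarrow> real^'m" where "imv v = (\<chi> i. Im (v $ i))"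

lemma Re_mat_add[simp]: "Re_mat (P + Q) = Re_mat P + Re_mat Q"
  and Im_mat_add[simp]: "Im_mat (P + Q) = Im_mat P + Im_mat Q"
  and Re_cmat[simp]: "Re_mat (cmat X) = X"
  and Im_cmat[simp]: "Im_mat (cmat X) = 0"
  by (simp_all add: Re_mat_def Im_mat_def cmat_def vec_eq_iff)

lemma Re_mat_mult[simp]: "Re_mat ((P::complex^'m::finite^'m) ** Q) = Re_mat P ** Re_mat Q - Im_mat P ** Im_mat Q"
  and Im_mat_mult[simp]: "Im_mat (P ** Q) = Re_mat P ** Im_mat Q + Im_mat P ** Re_mat Q"
  by (simp_all add: Re_mat_def Im_mat_def vec_eq_iff matrix_matrix_mult_def Re_sum Im_sum
      sum_subtractf[symmetric] sum.distrib[symmetric])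

lemma rev_mult: "crev ((P::complex^'m::finite^'m) *v v) = Re_mat P *v crev v - Im_mat P *v imv v"
  and imv_mult: "imv (P *v v) = Re_mat P *v imv v + Im_mat P *v crev v"
  by (simp_all add: crev_def imv_def Re_mat_def Im_mat_def vec_eq_iff matrix_vector_mult_def Re_sum Im_sum
      sum_subtractf[symmetric] sum.distrib[symmetric])

lemma rev_imv_zero: "crev 0 = 0" "imv 0 = 0" by (simp_all add: crev_def imv_def vec_eq_iff)

lemma rev_imv_eq0: "crev v = 0 \<Longrightarrow> imv v = 0 \<Longrightarrow> v = 0"
  by (simp add: crev_def imv_def vec_eq_iff complex_eq_iff)

lemma Sp_invertible:
  fixes A :: "real^('m::finite + 'm)^('m + 'm)"
  assumes "A \<in> Sp"
  shows "invertible A"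
proof (rule inv_of_ker)
  fix v assume v: "A *v v = 0"
  obtain x y where xy: "v = stk x y" using stk_decomp by blast
  have "omega (stk (-y) x) v = omega (A *v stk (-y) x) (A *v v)" using assms by (simp add: Sp_def)
  also have "\<dots> = 0" by (simp add: v omega_zero)
  finally have "y \<bullet> y + x \<bullet> x = 0" by (simp add: xy omega_stk)
  hence "x = 0" "y = 0" by (simp_all add: add_nonneg_eq_0_iff)
  thus "v = 0" by (simp add: xy stk_zero)
qed

lemma matrix_eq_v: "(A::'a::semiring_1^'n^'m) = B \<longleftrightarrow> (\<forall>x. A *v x = B *v x)"
  by (rule matrix_eq)

lemma pointwise:
  fixes A :: "real^('m::finite + 'm)^('m + 'm)"
  assumes ASp: "A \<in> Sp" and t1: "t1 \<in> SH" and t2: "t2 \<in> SH"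
  shows "sp_act A t1 = t2 \<longleftrightarrow>
     A ** taming_form (Re_mat t1) (Im_mat t1) ** matrix_inv A = taming_form (Re_mat t2) (Im_mat t2)"
proof -
  define R1 where "R1 = Re_mat t1"
  define I1 where "I1 = Im_mat t1"
  define R2 where "R2 = Re_mat t2"
  define I2 where "I2 = Im_mat t2"
  define a where "a = blk_a A"
  define b where "b = blk_b A"
  define c where "c = blk_c A"
  define d where "d = blk_d A"
  define X1 where "X1 = a + b ** R1"
  define X2 where "X2 = b ** I1"
  define Y1 where "Y1 = c + d ** R1"
  define Y2 where "Y2 = d ** I1"
  define J1 where "J1 = taming_form R1 I1"
  define J2 where "J2 = taming_form R2 I2"
  define M where "M = cmat a + cmat b ** t1"
  define C where "C = cmat c + cmat d ** t1"
  have I1pos: "pos_def_mat I1" and R1sym: "transpose R1 = R1" using SH_sym[OF t1] by (simp_all add: I1_def R1_def)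
  have I2pos: "pos_def_mat I2" using SH_sym[OF t2] by (simp add: I2_def)
  have I1i: "invertible I1" and I2i: "invertible I2" using I1pos I2pos posdef_inv by blast+
  have Ai: "invertible A" using Sp_invertible[OF ASp] .
  have Aom: "omega (A *v u) (A *v v) = omega u v" for u v using ASp by (simp add: Sp_def)
  have ReM: "Re_mat M = X1" and ImM: "Im_mat M = X2"
    by (simp_all add: M_def X1_def X2_def R1_def I1_def)
  have ReC: "Re_mat C = Y1" and ImC: "Im_mat C = Y2"
    by (simp_all add: C_def Y1_def Y2_def R1_def I1_def)
  have Astk: "A *v stk x y = stk (a *v x + b *v y) (c *v x + d *v y)" for x y
    by (simp add: mv_stk a_def b_def c_def d_def)
  have X1v: "X1 *v z = a *v z + b *v (R1 *v z)" for z
    by (simp add: X1_def matrix_vector_mult_add_rdistrib matrix_vector_mul_assoc)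
  have X2v: "X2 *v z = b *v (I1 *v z)" for z by (simp add: X2_def matrix_vector_mul_assoc)
  have Y1v: "Y1 *v z = c *v z + d *v (R1 *v z)" for z
    by (simp add: Y1_def matrix_vector_mult_add_rdistrib matrix_vector_mul_assoc)
  have Y2v: "Y2 *v z = d *v (I1 *v z)" for z by (simp add: Y2_def matrix_vector_mul_assoc)
  have Mi: "invertible M"
  proof (rule inv_of_ker)
    fix v assume Mv: "M *v v = 0"
    define u where "u = crev v"
    define w where "w = imv v"
    have e1: "X1 *v u - X2 *v w = 0" using arg_cong[OF Mv, of crev]
      by (simp add: rev_mult ReM ImM u_def w_def rev_imv_zero)
    have e2: "X1 *v w + X2 *v u = 0" using arg_cong[OF Mv, of imv]
      by (simp add: imv_mult ReM ImM u_def w_def rev_imv_zero)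
    define p where "p = stk u (R1 *v u - I1 *v w)"
    define q where "q = stk w (R1 *v w + I1 *v u)"
    have Ap: "A *v p = stk 0 (c *v u + d *v (R1 *v u - I1 *v w))"
      using e1 by (simp add: p_def Astk X1v X2v matrix_vector_mult_diff_distrib algebra_simps)
    have Aq: "A *v q = stk 0 (c *v w + d *v (R1 *v w + I1 *v u))"
      using e2 by (simp add: q_def Astk X1v X2v matrix_vector_right_distrib algebra_simps)
    have "omega p q = 0" using Aom[of p q] by (simp add: Ap Aq omega_stk)
    moreover have rs: "w \<bullet> (R1 *v u) = u \<bullet> (R1 *v w)"
      using sym_inner[OF R1sym, of w u] by (simp add: inner_commute)
    moreover have "omega p q = - (u \<bullet> (I1 *v u)) - w \<bullet> (I1 *v w)"
      using rs by (simp add: p_def q_def omega_stk inner_add_right inner_diff_left inner_diff_right inner_commute)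
    ultimately have s0: "u \<bullet> (I1 *v u) + w \<bullet> (I1 *v w) = 0" by simp
    have "u \<bullet> (I1 *v u) = 0" "w \<bullet> (I1 *v w) = 0"
      using s0 posdef_nonneg[OF I1pos, of u] posdef_nonneg[OF I1pos, of w] by linarith+
    hence "u = 0" "w = 0" using I1pos unfolding pos_def_mat_def by (metis less_irrefl)+
    thus "v = 0" using rev_imv_eq0[of v] by (simp add: u_def w_def)
  qed
  have "sp_act A t1 = t2 \<longleftrightarrow> C = t2 ** M"
  proof
    assume "sp_act A t1 = t2"
    hence "C ** matrix_inv M = t2" by (simp add: sp_act_def C_def M_def a_def b_def c_def d_def)
    hence "C ** matrix_inv M ** M = t2 ** M" by simp
    thus "C = t2 ** M" by (simp add: minv(2)[OF Mi] flip: matrix_mul_assoc)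
  next
    assume "C = t2 ** M"
    hence "C ** matrix_inv M = t2" by (simp add: minv(1)[OF Mi] flip: matrix_mul_assoc)
    thus "sp_act A t1 = t2" by (simp add: sp_act_def C_def M_def a_def b_def c_def d_def)
  qed
  also have "\<dots> \<longleftrightarrow> Y1 = R2 ** X1 - I2 ** X2 \<and> Y2 = R2 ** X2 + I2 ** X1"
    by (simp add: Re_Im_eq ReC ImC ReM ImM R2_def I2_def)
  also have "\<dots> \<longleftrightarrow> (\<forall>z. Y1 *v z = R2 *v (X1 *v z) - I2 *v (X2 *v z)) \<and>
                    (\<forall>z. Y2 *v z = R2 *v (X2 *v z) + I2 *v (X1 *v z))"
    by (simp add: matrix_eq_v matrix_vector_mult_diff_rdistrib matrix_vector_mult_add_rdistrib matrix_vector_mul_assoc)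
  also have "\<dots> \<longleftrightarrow> A ** J1 = J2 ** A"
  proof -
    define P where "P z = A *v stk z (R1 *v z)" for z
    define Q where "Q z = A *v stk 0 (I1 *v z)" for z
    have Pz: "P z = stk (X1 *v z) (Y1 *v z)" for z by (simp add: P_def Astk X1v Y1v)
    have Qz: "Q z = stk (X2 *v z) (Y2 *v z)" for z by (simp add: Q_def Astk X2v Y2v)
    have J1P: "J1 *v stk z (R1 *v z) = - stk 0 (I1 *v z)" for z
      by (simp add: J1_def tf_stk stk_neg)
    have J1Q: "J1 *v stk 0 (I1 *v z) = stk z (R1 *v z)" for z
      by (simp add: J1_def tf_stk minv_vec[OF I1i])
    have J2v: "J2 *v stk p q = stk (matrix_inv I2 *v (q - R2 *v p)) (- (I2 *v p) + R2 *v (matrix_inv I2 *v (q - R2 *v p)))" for p q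
      by (simp add: J2_def tf_stk)
    show ?thesis
    proof
      assume V: "(\<forall>z. Y1 *v z = R2 *v (X1 *v z) - I2 *v (X2 *v z)) \<and>
                 (\<forall>z. Y2 *v z = R2 *v (X2 *v z) + I2 *v (X1 *v z))"
      have JQ: "J2 *v Q z = P z" for z
        using V by (simp add: Qz Pz J2v minv_vec[OF I2i])
      have JP: "J2 *v P z = - Q z" for z
        using V by (simp add: Qz Pz J2v minv_vec[OF I2i] mv_neg_right stk_neg)
      show "A ** J1 = J2 ** A"
      proof (rule matrix_eq[THEN iffD2], intro allI)
        fix v :: "real^('m+'m)"
        obtain x y where xy: "v = stk x y" using stk_decomp by blast
        define z where "z = matrix_inv I1 *v (y - R1 *v x)"
        have vd: "v = stk x (R1 *v x) + stk 0 (I1 *v z)"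
          by (simp add: xy z_def stk_add minv_vec[OF I1i])
        have "(A ** J1) *v v = A *v (J1 *v stk x (R1 *v x)) + A *v (J1 *v stk 0 (I1 *v z))"
          by (simp add: vd matrix_vector_right_distrib flip: matrix_vector_mul_assoc)
        also have "\<dots> = - Q x + P z" by (simp add: J1P J1Q mv_neg_right P_def Q_def)
        also have "\<dots> = J2 *v P x + J2 *v Q z" by (simp add: JP JQ)
        also have "\<dots> = (J2 ** A) *v v"
          by (simp add: vd P_def Q_def matrix_vector_right_distrib flip: matrix_vector_mul_assoc)
        finally show "(A ** J1) *v v = (J2 ** A) *v v" .
      qed
    next
      assume AJ: "A ** J1 = J2 ** A"
      have JQ: "J2 *v Q z = P z" for z
      proof -
        have "J2 *v Q z = (J2 ** A) *v stk 0 (I1 *v z)" by (simp add: Q_def matrix_vector_mul_assoc)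
        also have "\<dots> = A *v (J1 *v stk 0 (I1 *v z))" by (simp add: matrix_vector_mul_assoc AJ)
        finally show ?thesis by (simp add: J1Q P_def)
      qed
      have V: "Y1 *v z = R2 *v (X1 *v z) - I2 *v (X2 *v z) \<and> Y2 *v z = R2 *v (X2 *v z) + I2 *v (X1 *v z)" for z
      proof -
        have "stk (matrix_inv I2 *v (Y2 *v z - R2 *v (X2 *v z)))
            (- (I2 *v (X2 *v z)) + R2 *v (matrix_inv I2 *v (Y2 *v z - R2 *v (X2 *v z))))
          = stk (X1 *v z) (Y1 *v z)"
          using JQ[of z] by (simp only: Qz Pz J2v)
        hence e: "matrix_inv I2 *v (Y2 *v z - R2 *v (X2 *v z)) = X1 *v z"
          "- (I2 *v (X2 *v z)) + R2 *v (matrix_inv I2 *v (Y2 *v z - R2 *v (X2 *v z))) = Y1 *v z"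
          by (auto simp only: stk_eq_iff)
        have e': "Y2 *v z - R2 *v (X2 *v z) = I2 *v (X1 *v z)"
          using arg_cong[OF e(1), of "\<lambda>v. I2 *v v"] by (simp add: minv_vec[OF I2i])
        have e2: "- (I2 *v (X2 *v z)) + R2 *v (X1 *v z) = Y1 *v z"
          by (subst e(1)[symmetric]) (rule e(2))
        show ?thesis using e2 e' by (simp add: algebra_simps)
      qed
      thus "(\<forall>z. Y1 *v z = R2 *v (X1 *v z) - I2 *v (X2 *v z)) \<and>
                 (\<forall>z. Y2 *v z = R2 *v (X2 *v z) + I2 *v (X1 *v z))" by blast
    qed
  qed
  also have "\<dots> \<longleftrightarrow> A ** J1 ** matrix_inv A = J2"
  proof
    assume "A ** J1 = J2 ** A"
    thus "A ** J1 ** matrix_inv A = J2" by (simp add: minv(1)[OF Ai] flip: matrix_mul_assoc)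
  next
    assume "A ** J1 ** matrix_inv A = J2"
    hence "A ** J1 ** matrix_inv A ** A = J2 ** A" by simp
    thus "A ** J1 = J2 ** A" by (simp add: minv(2)[OF Ai] flip: matrix_mul_assoc)
  qed
  finally show ?thesis by (simp add: J1_def J2_def R1_def I1_def R2_def I2_def)
qed


theorem proposition2p29:
  fixes V :: "(real^'n::finite) set"
    and G :: "real^'n \<Rightarrow> real^'n^'n"
    and J :: "real^'n \<Rightarrow> real^('m::finite + 'm)^('m + 'm)"
    and N :: "real^'n \<Rightarrow> complex^'m^'m"
  assumes "open V"
    and "riemannian_metric V G"
    and "taming_map V J"
    and "N = mu J"
  shows "{(f, A). f \<in> Iso V G \<and> A \<in> Sp \<and> (\<forall>x\<in>V. sp_act A (N x) = N (f x))}
       = {(f, A). f \<in> Iso V G \<and> A \<in> Sp \<and> (\<forall>x\<in>V. A ** J x ** matrix_inv A = J (f x))}"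
proof -
  have tame: "x \<in> V \<Longrightarrow> tame_cs (J x)" for x using assms(3) by (simp add: taming_map_def)
  have key: "sp_act A (N x) = N (f x) \<longleftrightarrow> A ** J x ** matrix_inv A = J (f x)"
    if f: "f \<in> Iso V G" and A: "A \<in> Sp" and x: "x \<in> V" for f A x
  proof -
    have fx: "f x \<in> V" using f x by (auto simp: Iso_def diffeo_on_def bij_betw_def)
    note m1 = mu_props[of J x, OF tame[OF x]] and m2 = mu_props[of J "f x", OF tame[OF fx]]
    have "sp_act A (mu J x) = mu J (f x) \<longleftrightarrow>
      A ** taming_form (Re_mat (mu J x)) (Im_mat (mu J x)) ** matrix_inv A
        = taming_form (Re_mat (mu J (f x))) (Im_mat (mu J (f x)))"
      using pointwise[OF A, of "mu J x" "mu J (f x)"] m1 m2 by blast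
    thus ?thesis using m1 m2 assms(4) by metis
  qed
  show ?thesis
  proof (rule set_eqI)
    fix p :: "(real^'n \<Rightarrow> real^'n) \<times> (real^('m + 'm)^('m + 'm))"
    obtain f A where p: "p = (f, A)" by (cases p)
    show "p \<in> {(f, A). f \<in> Iso V G \<and> A \<in> Sp \<and> (\<forall>x\<in>V. sp_act A (N x) = N (f x))} \<longleftrightarrow>
          p \<in> {(f, A). f \<in> Iso V G \<and> A \<in> Sp \<and> (\<forall>x\<in>V. A ** J x ** matrix_inv A = J (f x))}"
      using key[of f A] by (auto simp: p)
  qed
qed

end
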